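(* Let $\mathfrak g$ be a finite-dimensional real Lie algebra that has an abelian ideal of codimension one. Then $\mathfrak g$ admits an inner product with a geodesic basis, unless $\mathfrak g$ is isomorphic to $\mathcal A_n$ for some $n\ge1$.
   Context: For an inner product $\langle\cdot,\cdot\rangle$ on a real Lie algebra $\mathfrak g$, a nonzero $X\in\mathfrak g$ is a geodesic element if $\langle X,[X,Y]\rangle=0$ for all $Y\in\mathfrak g$; a geodesic basis is a basis consisting of geodesic elements. For $n\ge1$, $\mathcal A_n$ denotes the $(n+1)$-dimensional real Lie algebra with basis $\{Y,X_1,\dots,X_n\}$ and brackets $[Y,X_i]=X_i$, $[X_i,X_j]=0$. *)

theory Defs
  imports "HOL-Analysis.Analysis"
begin

text \<open>A finite-dimensional real Lie algebra is modelled as a finite-dimensional real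
vector space (a type of class euclidean_space; its built-in inner product is NOT used)
together with a bracket.\<close>

definition lie_bracket :: "('a::real_vector \<Rightarrow> 'a \<Rightarrow> 'a) \<Rightarrow> bool" where
  "lie_bracket B \<longleftrightarrow> bilinear B \<and> (\<forall>x. B x x = 0) \<and>
     (\<forall>x y z. B x (B y z) + B y (B z x) + B z (B x y) = 0)"

definition lie_ideal :: "('a::real_vector \<Rightarrow> 'a \<Rightarrow> 'a) \<Rightarrow> 'a set \<Rightarrow> bool" where
  "lie_ideal B I \<longleftrightarrow> subspace I \<and> (\<forall>x y. y \<in> I \<longrightarrow> B x y \<in> I)"

definition abelian_sub :: "('a::real_vector \<Rightarrow> 'a \<Rightarrow> 'a) \<Rightarrow> 'a set \<Rightarrow> bool" where
  "abelian_sub B I \<longleftrightarrow> (\<forall>x\<in>I. \<forall>y\<in>I. B x y = 0)"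

definition inner_prod :: "('a::real_vector \<Rightarrow> 'a \<Rightarrow> real) \<Rightarrow> bool" where
  "inner_prod ip \<longleftrightarrow> bilinear ip \<and> (\<forall>x y. ip x y = ip y x) \<and> (\<forall>x. x \<noteq> 0 \<longrightarrow> ip x x > 0)"

definition geodesic_elem ::
  "('a::real_vector \<Rightarrow> 'a \<Rightarrow> 'a) \<Rightarrow> ('a \<Rightarrow> 'a \<Rightarrow> real) \<Rightarrow> 'a \<Rightarrow> bool" where
  "geodesic_elem B ip X \<longleftrightarrow> X \<noteq> 0 \<and> (\<forall>Y. ip X (B X Y) = 0)"

definition has_geodesic_basis ::
  "('a::real_vector \<Rightarrow> 'a \<Rightarrow> 'a) \<Rightarrow> ('a \<Rightarrow> 'a \<Rightarrow> real) \<Rightarrow> bool" where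
  "has_geodesic_basis B ip \<longleftrightarrow>
     (\<exists>S. independent S \<and> span S = UNIV \<and> (\<forall>X\<in>S. geodesic_elem B ip X))"

text \<open>(g,B) is isomorphic to A_n iff g has a basis Y, X_1, ..., X_n with
[Y,X_i] = X_i and [X_i,X_j] = 0 (the image of the standard basis of A_n under
a Lie algebra isomorphism; conversely such a basis defines an isomorphism).\<close>
definition iso_to_A :: "('a::real_vector \<Rightarrow> 'a \<Rightarrow> 'a) \<Rightarrow> nat \<Rightarrow> bool" where
  "iso_to_A B n \<longleftrightarrow> (\<exists>Y X. inj_on X {1..n} \<and> Y \<notin> X ` {1..n} \<and>
      independent (insert Y (X ` {1..n})) \<and> span (insert Y (X ` {1..n})) = UNIV \<and>
      (\<forall>i\<in>{1..n}. B Y (X i) = X i) \<and>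
      (\<forall>i\<in>{1..n}. \<forall>j\<in>{1..n}. B (X i) (X j) = 0))"

end

theory Submission
  imports Defs
begin

lemma lie_anti:
  assumes "lie_bracket B" shows "B x y = - B y x"
proof -
  have bl: "bilinear B" and al: "\<And>z. B z z = 0" using assms by (auto simp: lie_bracket_def)
  have "0 = B (x+y) (x+y)" using al by simp
  also have "\<dots> = B x x + B x y + B y x + B y y"
    by (simp add: bilinear_ladd[OF bl] bilinear_radd[OF bl])
  finally show ?thesis using al by (simp add: eq_neg_iff_add_eq_0 add.assoc)
qed

lemma decomp:
  assumes "subspace I" "span (insert Y I) = UNIV"
  obtains t where "w - t *\<^sub>R Y \<in> I"
proof -
  have "w \<in> span (insert Y I)" using assms by simp
  then obtain t where "w - t *\<^sub>R Y \<in> span I" by (auto simp: span_insert)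
  then show ?thesis using that assms by (metis span_eq_iff)
qed

lemma geo_basis:
  fixes B :: "'a::euclidean_space \<Rightarrow> 'a \<Rightarrow> 'a" and ip :: "'a \<Rightarrow> 'a \<Rightarrow> real"
  assumes lb: "lie_bracket B" and sI: "subspace I" and ab: "\<forall>x\<in>I. \<forall>y\<in>I. B x y = 0"
    and id: "\<forall>x. \<forall>y\<in>I. B x y \<in> I" and YI: "Y \<notin> I" and sp: "span (insert Y I) = UNIV"
    and bip: "bilinear ip" and orth: "\<forall>z\<in>I. ip Y z = 0"
    and nul: "I \<subseteq> span {z\<in>I. ip z (B Y z) = 0}"
  shows "has_geodesic_basis B ip"
proof -
  have bl: "bilinear B" and al: "\<And>z. B z z = 0" using lb by (auto simp: lie_bracket_def)
  have Y0: "Y \<noteq> 0" using YI sI subspace_0 by blast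
  have gY: "geodesic_elem B ip Y"
    unfolding geodesic_elem_def
  proof (intro conjI allI Y0)
    fix w
    obtain t where z: "w - t *\<^sub>R Y \<in> I" using decomp[OF sI sp] by blast
    have "w = (w - t *\<^sub>R Y) + t *\<^sub>R Y" by simp
    then have "B Y w = B Y (w - t *\<^sub>R Y) + t *\<^sub>R B Y Y"
      by (metis bilinear_radd[OF bl] bilinear_rmul[OF bl])
    then have "B Y w = B Y (w - t *\<^sub>R Y)" using al by simp
    then show "ip Y (B Y w) = 0" using orth id z by simp
  qed
  have gx: "geodesic_elem B ip x" if "x \<in> I" "x \<noteq> 0" "ip x (B Y x) = 0" for x
    unfolding geodesic_elem_def
  proof (intro conjI allI that(2))
    fix w
    obtain t where z: "w - t *\<^sub>R Y \<in> I" using decomp[OF sI sp] by blast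
    have "w = (w - t *\<^sub>R Y) + t *\<^sub>R Y" by simp
    then have "B x w = B x (w - t *\<^sub>R Y) + t *\<^sub>R B x Y"
      by (metis bilinear_radd[OF bl] bilinear_rmul[OF bl])
    then have "B x w = t *\<^sub>R (- B Y x)" using ab z that(1) lie_anti[OF lb, of x Y] by simp
    then have "ip x (B x w) = t * (- ip x (B Y x))"
      by (simp add: bilinear_rmul[OF bip] bilinear_rneg[OF bip])
    then show "ip x (B x w) = 0" using that(3) by simp
  qed
  define G where "G = insert Y ({z\<in>I. ip z (B Y z) = 0} - {0})"
  have gG: "\<forall>X\<in>G. geodesic_elem B ip X" using gY gx unfolding G_def by auto
  have "insert Y I \<subseteq> span G"
  proof -
    have "span {z\<in>I. ip z (B Y z) = 0} = span ({z\<in>I. ip z (B Y z) = 0} - {0})" by simp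
    also have "\<dots> \<subseteq> span G" by (rule span_mono) (auto simp: G_def)
    finally show ?thesis using nul by (auto simp: G_def span_base)
  qed
  then have spG: "span G = UNIV" using sp
    by (metis span_minimal subspace_span top.extremum_uniqueI)
  obtain S where S: "S \<subseteq> G" "independent S" "G \<subseteq> span S" by (rule maximal_independent_subset)
  have "span S = UNIV" using S spG
    by (metis span_minimal subspace_span top.extremum_uniqueI)
  then show ?thesis unfolding has_geodesic_basis_def using S gG by blast
qed


lemma quad_roots:
  fixes a b c :: real
  assumes "a * c < 0"
  obtains t1 t2 where "t1 \<noteq> t2" "c * t1^2 + b * t1 + a = 0" "c * t2^2 + b * t2 + a = 0"
proof -
  have c0: "c \<noteq> 0" using assms by auto
  define D where "D = b^2 - 4*a*c"
  have D: "D > 0" using assms zero_le_power2[of b] unfolding D_def by linarith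
  define t1 where "t1 = (- b + sqrt D) / (2*c)"
  define t2 where "t2 = (- b - sqrt D) / (2*c)"
  have sD: "sqrt D > 0" using D by simp
  have sq: "(sqrt D)^2 = D" using D by simp
  have "t1 \<noteq> t2" using sD c0 by (simp add: t1_def t2_def divide_simps)
  moreover have "c * t1^2 + b * t1 + a = 0"
  proof -
    have "4*c*(c * t1^2 + b * t1 + a) = (sqrt D)^2 - b^2 + 4*a*c"
      using c0 unfolding t1_def by (simp add: power2_eq_square field_simps)
    then have "4*c*(c * t1^2 + b * t1 + a) = 0" using sq D_def by simp
    then show ?thesis using c0 by simp
  qed
  moreover have "c * t2^2 + b * t2 + a = 0"
  proof -
    have "4*c*(c * t2^2 + b * t2 + a) = (sqrt D)^2 - b^2 + 4*a*c"
      using c0 unfolding t2_def by (simp add: power2_eq_square field_simps)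
    then have "4*c*(c * t2^2 + b * t2 + a) = 0" using sq D_def by simp
    then show ?thesis using c0 by simp
  qed
  ultimately show ?thesis using that by blast
qed

lemma null_span_pt:
  fixes q :: "'a::real_vector \<Rightarrow> real"
  assumes sI: "subspace I"
    and ex: "\<And>t. q (x + t *\<^sub>R m) = q x + t * bb + t^2 * q m"
    and "x \<in> I" "m \<in> I" "q x * q m < 0"
  shows "x \<in> span {z\<in>I. q z = 0}"
proof -
  obtain t1 t2 where t: "t1 \<noteq> t2" "q m * t1^2 + bb * t1 + q x = 0" "q m * t2^2 + bb * t2 + q x = 0"
    using quad_roots[OF assms(5)] by blast
  have z1: "x + t1 *\<^sub>R m \<in> {z\<in>I. q z = 0}"
    using ex[of t1] t(2) assms(3,4) sI by (auto simp: subspace_add subspace_scale algebra_simps)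
  have z2: "x + t2 *\<^sub>R m \<in> {z\<in>I. q z = 0}"
    using ex[of t2] t(3) assms(3,4) sI by (auto simp: subspace_add subspace_scale algebra_simps)
  have "x = (t2 / (t2 - t1)) *\<^sub>R (x + t1 *\<^sub>R m) - (t1 / (t2 - t1)) *\<^sub>R (x + t2 *\<^sub>R m)"
  proof -
    have "(t2 - t1) *\<^sub>R x = t2 *\<^sub>R (x + t1 *\<^sub>R m) - t1 *\<^sub>R (x + t2 *\<^sub>R m)"
      by (simp add: algebra_simps)
    then have "(1/(t2 - t1)) *\<^sub>R ((t2 - t1) *\<^sub>R x) = (1/(t2 - t1)) *\<^sub>R (t2 *\<^sub>R (x + t1 *\<^sub>R m) - t1 *\<^sub>R (x + t2 *\<^sub>R m))"
      by simp
    then show ?thesis using t(1) by (simp add: scaleR_diff_right divide_inverse mult.commute)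
  qed
  also have "\<dots> \<in> span {z\<in>I. q z = 0}"
    by (intro span_diff span_scale span_base z1 z2)
  finally show ?thesis .
qed

lemma null_span:
  fixes q :: "'a::real_vector \<Rightarrow> real"
  assumes sI: "subspace I"
    and ex: "\<And>x m t. x \<in> I \<Longrightarrow> m \<in> I \<Longrightarrow> q (x + t *\<^sub>R m) = q x + t * bb x m + t^2 * q m"
    and c: "(\<forall>x\<in>I. q x = 0) \<or> (\<exists>p\<in>I. \<exists>n\<in>I. q p > 0 \<and> q n < 0)"
  shows "I \<subseteq> span {z\<in>I. q z = 0}"
proof
  fix x assume x: "x \<in> I"
  show "x \<in> span {z\<in>I. q z = 0}"
  proof (cases "q x = 0")
    case True then show ?thesis using x by (auto intro: span_base)
  next
    case False
    then obtain p n where pn: "p \<in> I" "n \<in> I" "q p > 0" "q n < 0" using c x by auto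
    show ?thesis
    proof (cases "q x > 0")
      case True
      then have "q x * q n < 0" using pn by (simp add: mult_pos_neg)
      then show ?thesis using null_span_pt[OF sI ex[OF x pn(2)] x pn(2)] by blast
    next
      case False
      then have "q x * q p < 0" using pn \<open>q x \<noteq> 0\<close> by (simp add: mult_neg_pos)
      then show ?thesis using null_span_pt[OF sI ex[OF x pn(1)] x pn(1)] by blast
    qed
  qed
qed


definition ipk :: "real \<Rightarrow> 'a::euclidean_space \<Rightarrow> 'a \<Rightarrow> 'a \<Rightarrow> real" where
  "ipk k u x y = x \<bullet> y + k * ((x \<bullet> u) * (y \<bullet> u))"

lemma core_case1:
  fixes A :: "'a::euclidean_space \<Rightarrow> 'a"
  assumes lin: "linear A" and sI: "subspace I"
    and u: "u \<in> I" and r: "r \<in> I" and ur: "u \<bullet> r = 0" and c: "u \<bullet> A r \<noteq> 0"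
  shows "\<exists>k. k \<ge> 0 \<and> (\<exists>p\<in>I. \<exists>n\<in>I. ipk k u p (A p) > 0 \<and> ipk k u n (A n) < 0)"
proof -
  define c where "c = u \<bullet> A r"
  have c0: "c \<noteq> 0" using c c_def by simp
  have u0: "u \<noteq> 0" using c by auto
  have uu: "u \<bullet> u > 0" using u0 by simp
  have ru: "r \<bullet> u = 0" using ur by (simp add: inner_commute)
  have key: "(u + s *\<^sub>R r) \<bullet> u = u \<bullet> u" "A (u + s *\<^sub>R r) \<bullet> u = u \<bullet> A u + s * c" for s
  proof -
    show "(u + s *\<^sub>R r) \<bullet> u = u \<bullet> u" using ru by (simp add: inner_add_left)
    have "A (u + s *\<^sub>R r) \<bullet> u = A u \<bullet> u + s * (A r \<bullet> u)"
      by (simp add: linear_add[OF lin] linear_scale[OF lin] inner_add_left)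
    then show "A (u + s *\<^sub>R r) \<bullet> u = u \<bullet> A u + s * c"
      by (simp add: c_def inner_commute)
  qed
  define s1 where "s1 = (1 - u \<bullet> A u) / c"
  define s2 where "s2 = (-1 - u \<bullet> A u) / c"
  define x1 where "x1 = u + s1 *\<^sub>R r"
  define x2 where "x2 = u + s2 *\<^sub>R r"
  have x1I: "x1 \<in> I" and x2I: "x2 \<in> I" using u r sI
    by (auto simp: x1_def x2_def subspace_add subspace_scale)
  have a1: "A x1 \<bullet> u = 1" using key(2)[of s1] c0 by (simp add: x1_def s1_def)
  have a2: "A x2 \<bullet> u = -1" using key(2)[of s2] c0 by (simp add: x2_def s2_def)
  define k where "k = (\<bar>x1 \<bullet> A x1\<bar> + \<bar>x2 \<bullet> A x2\<bar> + 1) / (u \<bullet> u)"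
  have kuu: "k * (u \<bullet> u) = \<bar>x1 \<bullet> A x1\<bar> + \<bar>x2 \<bullet> A x2\<bar> + 1" using uu by (simp add: k_def)
  have k0: "k \<ge> 0" using uu by (simp add: k_def)
  have "ipk k u x1 (A x1) = x1 \<bullet> A x1 + k * (u \<bullet> u)"
    using key(1)[of s1] a1 by (simp add: ipk_def x1_def[symmetric])
  then have p: "ipk k u x1 (A x1) > 0" using kuu by linarith
  have "ipk k u x2 (A x2) = x2 \<bullet> A x2 - k * (u \<bullet> u)"
    using key(1)[of s2] a2 by (simp add: ipk_def x2_def[symmetric])
  then have n: "ipk k u x2 (A x2) < 0" using kuu by linarith
  show ?thesis using k0 p n x1I x2I by blast
qed

lemma eigen_each:
  fixes A :: "'a::euclidean_space \<Rightarrow> 'a"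
  assumes lin: "linear A" and sI: "subspace I" and inv: "\<forall>z\<in>I. A z \<in> I"
    and h: "\<forall>u\<in>I. \<forall>r\<in>I. u \<bullet> r = 0 \<longrightarrow> u \<bullet> A r = 0"
    and r: "r \<in> I"
  shows "A r = ((r \<bullet> A r) / (r \<bullet> r)) *\<^sub>R r"
proof (cases "r = 0")
  case True then show ?thesis using linear_0[OF lin] by simp
next
  case False
  define l where "l = (r \<bullet> A r) / (r \<bullet> r)"
  define v where "v = A r - l *\<^sub>R r"
  have vI: "v \<in> I" using inv r sI by (simp add: v_def subspace_diff subspace_scale)
  have rr: "r \<bullet> r \<noteq> 0" using False by simp
  have "v \<bullet> r = A r \<bullet> r - l * (r \<bullet> r)" by (simp add: v_def inner_diff_left)
  moreover have "A r \<bullet> r = r \<bullet> A r" by (rule inner_commute)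
  moreover have "l * (r \<bullet> r) = r \<bullet> A r" using rr by (simp add: l_def)
  ultimately have vr: "v \<bullet> r = 0" by simp
  have "v \<bullet> A r = 0" using h vI r vr by blast
  then have "v \<bullet> v = 0" using vr by (simp add: v_def inner_diff_right inner_commute)
  then have "v = 0" by simp
  then show ?thesis by (simp add: v_def l_def)
qed

lemma eig_const:
  fixes A :: "'a::real_vector \<Rightarrow> 'a"
  assumes lin: "linear A" and "A r = a *\<^sub>R r" "A s = b *\<^sub>R s" "A (r + s) = m *\<^sub>R (r + s)"
    and "r \<noteq> 0" "s \<noteq> 0"
  shows "a = b"
proof -
  have e: "(a - m) *\<^sub>R r = (m - b) *\<^sub>R s"
    using assms(2-4) linear_add[OF lin, of r s] by (simp add: algebra_simps)
  show ?thesis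
  proof (cases "a = m")
    case True then show ?thesis using e assms(6) by simp
  next
    case False
    then have rr: "r = ((m - b)/(a - m)) *\<^sub>R s"
      using e by (metis (no_types, lifting) divide_inverse eq_vector_fraction_iff right_minus_eq scaleR_scaleR)
    have "A r = ((m - b)/(a - m)) *\<^sub>R (b *\<^sub>R s)" using rr assms(3) linear_scale[OF lin] by metis
    then have "A r = b *\<^sub>R r" using rr by (simp add: scaleR_scaleR mult.commute)
    then have "(a - b) *\<^sub>R r = 0" using assms(2) by (simp add: algebra_simps)
    then show ?thesis using assms(5) by simp
  qed
qed


lemma core:
  fixes A :: "'a::euclidean_space \<Rightarrow> 'a"
  assumes lin: "linear A" and sI: "subspace I" and inv: "\<forall>z\<in>I. A z \<in> I"
    and nsc: "\<not> (\<exists>l. l \<noteq> 0 \<and> I \<noteq> {0} \<and> (\<forall>z\<in>I. A z = l *\<^sub>R z))"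
  shows "\<exists>k u. k \<ge> 0 \<and> u \<in> I \<and> ((\<forall>x\<in>I. ipk k u x (A x) = 0) \<or>
            (\<exists>p\<in>I. \<exists>n\<in>I. ipk k u p (A p) > 0 \<and> ipk k u n (A n) < 0))"
proof (cases "\<exists>u\<in>I. \<exists>r\<in>I. u \<bullet> r = 0 \<and> u \<bullet> A r \<noteq> 0")
  case True
  then obtain u r where "u \<in> I" "r \<in> I" "u \<bullet> r = 0" "u \<bullet> A r \<noteq> 0" by blast
  then show ?thesis using core_case1[OF lin sI] by blast
next
  case False
  then have h: "\<forall>u\<in>I. \<forall>r\<in>I. u \<bullet> r = 0 \<longrightarrow> u \<bullet> A r = 0" by blast
  define lam where "lam z = (z \<bullet> A z) / (z \<bullet> z)" for z
  have eig: "A z = lam z *\<^sub>R z" if "z \<in> I" for z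
    using eigen_each[OF lin sI inv h that] by (simp add: lam_def)
  have u0: "(0::'a) \<in> I" using sI subspace_0 by blast
  show ?thesis
  proof (cases "I \<subseteq> {0}")
    case True
    then have "\<forall>x\<in>I. ipk 0 0 x (A x) = 0" by (auto simp: ipk_def)
    then show ?thesis using u0 by blast
  next
    case False
    then obtain r0 where r0: "r0 \<in> I" "r0 \<noteq> 0" by blast
    define l where "l = lam r0"
    have all: "A z = l *\<^sub>R z" if z: "z \<in> I" for z
    proof (cases "z = 0")
      case True then show ?thesis using linear_0[OF lin] by simp
    next
      case False
      have "z + r0 \<in> I" using z r0 sI by (simp add: subspace_add)
      then have "lam z = lam r0"
        using eig_const[OF lin eig[OF z] eig[OF r0(1)] eig[of "z + r0"] False r0(2)] by blast
      then show ?thesis using eig[OF z] by (simp add: l_def)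
    qed
    have "I \<noteq> {0}" using r0 by blast
    then have "l = 0" using nsc all by blast
    then have "\<forall>x\<in>I. ipk 0 0 x (A x) = 0" using all by (auto simp: ipk_def)
    then show ?thesis using u0 by blast
  qed
qed


lemma iso_lemma:
  fixes B :: "'a::euclidean_space \<Rightarrow> 'a \<Rightarrow> 'a"
  assumes lb: "lie_bracket B" and sI: "subspace I" and ab: "\<forall>x\<in>I. \<forall>y\<in>I. B x y = 0"
    and YI: "Y \<notin> I" and sp: "span (insert Y I) = UNIV"
    and l: "l \<noteq> 0" and I0: "I \<noteq> {0}" and all: "\<forall>z\<in>I. B Y z = l *\<^sub>R z"
  shows "\<exists>n\<ge>1. iso_to_A B n"
proof -
  have bl: "bilinear B" using lb by (simp add: lie_bracket_def)
  have spI: "span I = I" using sI by simp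
  obtain Bs where Bs: "Bs \<subseteq> I" "independent Bs" "I \<subseteq> span Bs" by (rule maximal_independent_subset)
  have fin: "finite Bs" using Bs(2) by (rule finiteI_independent)
  have cd: "card Bs = dim I" using basis_card_eq_dim[OF Bs(1) Bs(3) Bs(2)] .
  have spBs: "span Bs = I" using Bs spI span_mono
    by (metis span_minimal sI subset_antisym)
  have n1: "dim I \<ge> 1"
  proof (rule ccontr)
    assume "\<not> 1 \<le> dim I"
    then have "card Bs = 0" using cd by linarith
    then have "Bs = {}" using fin by simp
    then have "I \<subseteq> {0}" using spBs by auto
    then show False using I0 sI subspace_0 by blast
  qed
  obtain h where h: "bij_betw h {1..card Bs} Bs" using ex_bij_betw_nat_finite_1[OF fin] by blast
  have himg: "h ` {1..dim I} = Bs" using h cd by (simp add: bij_betw_def)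
  define Y' where "Y' = (1/l) *\<^sub>R Y"
  have Y'I: "Y' \<notin> I"
  proof
    assume "Y' \<in> I"
    then have "l *\<^sub>R Y' \<in> I" using sI by (simp add: subspace_scale)
    then show False using YI l by (simp add: Y'_def)
  qed
  have "iso_to_A B (dim I)"
    unfolding iso_to_A_def
  proof (intro exI[of _ Y'] exI[of _ h] conjI ballI)
    show "inj_on h {1..dim I}" using h cd by (simp add: bij_betw_def)
    show "Y' \<notin> h ` {1..dim I}" using himg Bs(1) Y'I by blast
    show "independent (insert Y' (h ` {1..dim I}))"
      using himg Bs(2) Y'I spBs by (simp add: independent_insertI)
    have "insert Y I \<subseteq> span (insert Y' (h ` {1..dim I}))"
    proof -
      have "Y = l *\<^sub>R Y'" using l by (simp add: Y'_def)
      then have "Y \<in> span (insert Y' Bs)" by (simp add: span_base span_scale)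
      moreover have "I \<subseteq> span (insert Y' Bs)" using spBs span_mono[of Bs "insert Y' Bs"] by blast
      ultimately show ?thesis using himg by blast
    qed
    then show "span (insert Y' (h ` {1..dim I})) = UNIV" using sp
      by (metis span_minimal subspace_span top.extremum_uniqueI)
    fix i assume i: "i \<in> {1..dim I}"
    have hi: "h i \<in> I" using i himg Bs(1) by blast
    show "B Y' (h i) = h i" using all hi l by (simp add: Y'_def bilinear_lmul[OF bl])
    fix j assume j: "j \<in> {1..dim I}"
    have "h j \<in> I" using j himg Bs(1) by blast
    then show "B (h i) (h j) = 0" using ab hi by blast
  qed
  then show ?thesis using n1 by blast
qed


lemma ipk_inner:
  assumes "k \<ge> 0" shows "inner_prod (ipk k u)"
proof -
  have l1: "linear (\<lambda>y. ipk k u x y)" for x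
    by (rule linearI) (simp_all add: ipk_def inner_add_right inner_add_left distrib_left distrib_right)
  have l2: "linear (\<lambda>x. ipk k u x y)" for y
    by (rule linearI) (simp_all add: ipk_def inner_add_left distrib_left distrib_right)
  have "bilinear (ipk k u)" using l1 l2 by (simp add: bilinear_def)
  moreover have "ipk k u x y = ipk k u y x" for x y
    unfolding ipk_def by (simp add: inner_commute mult.commute)
  moreover have "ipk k u x x > 0" if "x \<noteq> 0" for x
  proof -
    have "k * ((x \<bullet> u) * (x \<bullet> u)) \<ge> 0" using assms by simp
    then show ?thesis using that by (simp add: ipk_def add_pos_nonneg)
  qed
  ultimately show ?thesis by (simp add: inner_prod_def)
qed

lemma ipk_quad:
  fixes A :: "'a::euclidean_space \<Rightarrow> 'a"
  assumes lin: "linear A"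
  shows "ipk k u (x + t *\<^sub>R m) (A (x + t *\<^sub>R m)) = ipk k u x (A x)
      + t * (x \<bullet> A m + m \<bullet> A x + k * ((x \<bullet> u) * (A m \<bullet> u) + (m \<bullet> u) * (A x \<bullet> u)))
      + t^2 * ipk k u m (A m)"
proof -
  have e0: "A (x + t *\<^sub>R m) = A x + t *\<^sub>R A m" by (simp add: linear_add[OF lin] linear_scale[OF lin])
  have e1: "(x + t *\<^sub>R m) \<bullet> (A x + t *\<^sub>R A m) = x \<bullet> A x + t * (x \<bullet> A m) + t * (m \<bullet> A x) + t * t * (m \<bullet> A m)"
    by (simp add: inner_add_left inner_add_right distrib_left)
  have e2: "(x + t *\<^sub>R m) \<bullet> u = x \<bullet> u + t * (m \<bullet> u)" by (simp add: inner_add_left)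
  have e3: "(A x + t *\<^sub>R A m) \<bullet> u = A x \<bullet> u + t * (A m \<bullet> u)" by (simp add: inner_add_left)
  show ?thesis unfolding ipk_def e0 e1 e2 e3 power2_eq_square
    by (simp add: algebra_simps)
qed

theorem theorem1p3:
  fixes B :: "'a::euclidean_space \<Rightarrow> 'a \<Rightarrow> 'a"
  assumes "lie_bracket B"
    and "\<exists>I. lie_ideal B I \<and> abelian_sub B I \<and> dim I + 1 = DIM('a)"
    and "\<not> (\<exists>n\<ge>1. iso_to_A B n)"
  shows "\<exists>ip. inner_prod ip \<and> has_geodesic_basis B ip"
proof -
  note lb = assms(1)
  have bl: "bilinear B" using lb by (simp add: lie_bracket_def)
  obtain I where I: "lie_ideal B I" "abelian_sub B I" "dim I + 1 = DIM('a)" using assms(2) by blast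
  have sI: "subspace I" and id: "\<forall>x. \<forall>y\<in>I. B x y \<in> I" using I(1) by (auto simp: lie_ideal_def)
  have ab: "\<forall>x\<in>I. \<forall>y\<in>I. B x y = 0" using I(2) by (simp add: abelian_sub_def)
  have spI: "span I = I" using sI by simp
  have dlt: "dim I < DIM('a)" using I(3) by linarith
  obtain Y where Y: "Y \<noteq> 0" "\<And>y. y \<in> span I \<Longrightarrow> orthogonal Y y"
    using orthogonal_to_subspace_exists[OF dlt] by blast
  have orthY: "\<forall>z\<in>I. Y \<bullet> z = 0" using Y(2) spI by (simp add: orthogonal_def)
  have YI: "Y \<notin> I" using orthY Y(1) by auto
  have YsI: "Y \<notin> span I" unfolding spI by (rule YI)
  have "dim (insert Y I) = DIM('a)" using YsI I(3) by (simp add: dim_insert)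
  then have sp: "span (insert Y I) = UNIV" by (simp add: dim_eq_full)
  have lin: "linear (B Y)" using bl by (simp add: bilinear_def)
  have inv: "\<forall>z\<in>I. B Y z \<in> I" using id by blast
  have nsc: "\<not> (\<exists>l. l \<noteq> 0 \<and> I \<noteq> {0} \<and> (\<forall>z\<in>I. B Y z = l *\<^sub>R z))"
  proof
    assume "\<exists>l. l \<noteq> 0 \<and> I \<noteq> {0} \<and> (\<forall>z\<in>I. B Y z = l *\<^sub>R z)"
    then obtain l where l: "l \<noteq> 0" "I \<noteq> {0}" "\<forall>z\<in>I. B Y z = l *\<^sub>R z" by blast
    have "\<exists>n\<ge>1. iso_to_A B n" by (rule iso_lemma[OF lb sI ab YI sp l(1) l(2) l(3)])
    then show False using assms(3) by simp
  qed
  obtain k u where ku: "k \<ge> 0" "u \<in> I"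
    "(\<forall>x\<in>I. ipk k u x (B Y x) = 0) \<or> (\<exists>p\<in>I. \<exists>n\<in>I. ipk k u p (B Y p) > 0 \<and> ipk k u n (B Y n) < 0)"
    using core[OF lin sI inv nsc] by auto
  have ip: "inner_prod (ipk k u)" using ipk_inner[OF ku(1)] .
  then have bip: "bilinear (ipk k u)" by (simp add: inner_prod_def)
  have orth: "\<forall>z\<in>I. ipk k u Y z = 0" using orthY ku(2) by (simp add: ipk_def)
  have nul: "I \<subseteq> span {z\<in>I. ipk k u z (B Y z) = 0}"
    by (rule null_span[OF sI _ ku(3)]) (rule ipk_quad[OF lin])
  have "has_geodesic_basis B (ipk k u)"
    by (rule geo_basis[OF lb sI ab id YI sp bip orth nul])
  then show ?thesis using ip by blast
qed

end
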